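(* Let $0=g_0<g_1<\dots<g_{n-1}$ be any increasing family of delays and $\theta\in(1/2,2\alpha)$. Then (for a suitable version of the Brownian motion) almost surely the path $\mathcal W(g)$ is $\theta$-Hölder rough at scale $T/2$ on $[0,T]$.
   Context: Fix $T>0$ and $\alpha\in(1/3,1/2)$. $W=(W^1,\dots,W^m)$ is a two-sided $m$-dimensional Brownian motion ($W_0=0$, $(W_t)_{t\ge0}$ and $(W_{-t})_{t\ge0}$ independent). $\mathcal W_t(g):=(W^k_{t-g_i})_{k=1,\dots,m;\,i=0,\dots,n-1}\in V:=\mathbb R^{m\times n}$, with increments $\mathcal W_{s,t}=\mathcal W_t-\mathcal W_s$. A path $Y:[0,T]\to V$ is called $\theta$-Hölder rough at scale $\varepsilon_0>0$ on $[0,T]$ if there exists $L>0$ such that for every $\varphi\in V^*$, every $s\in[0,T]$ and every $\varepsilon\in(0,\varepsilon_0)$ there exists $t\in[0,T]$ with $|t-s|\le\varepsilon$ and $|\varphi Y_{s,t}|\ge L\varepsilon^\theta|\varphi|$; the largest such $L$ is the modulus of $\theta$-Hölder roughness. *)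

theory Defs
  imports "HOL-Probability.Probability"
begin

text \<open>Components are indexed by k < m; W k t is the k-th coordinate at time t, t real.  This is equivalent to
  (W_t)_{t>=0} and (W_{-t})_{t>=0} being independent standard Brownian motions.\<close>
definition two_sided_bm :: "'a measure \<Rightarrow> nat \<Rightarrow> (nat \<Rightarrow> real \<Rightarrow> 'a \<Rightarrow> real) \<Rightarrow> bool" where
  "two_sided_bm M m W \<longleftrightarrow>
     prob_space M \<and>
     (\<forall>k<m. \<forall>\<omega>\<in>space M. W k 0 \<omega> = 0) \<and>
     (\<forall>k<m. \<forall>\<omega>\<in>space M. continuous_on UNIV (\<lambda>t. W k t \<omega>)) \<and>
     (\<forall>(N::nat) (ts::nat \<Rightarrow> real). (\<forall>i<N. ts i < ts (Suc i)) \<longrightarrow>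
        prob_space.indep_vars M (\<lambda>_. borel)
          (\<lambda>(k, i) \<omega>. W k (ts (Suc i)) \<omega> - W k (ts i) \<omega>) ({..<m} \<times> {..<N}) \<and>
        (\<forall>k<m. \<forall>i<N. distributed M lborel (\<lambda>\<omega>. W k (ts (Suc i)) \<omega> - W k (ts i) \<omega>)
                          (normal_density 0 (sqrt (ts (Suc i) - ts i)))))"

text \<open>A linear functional phi on R^I is given by its
  coefficients phi i; its norm is the Euclidean (dual) norm.\<close>
definition holder_rough :: "'i set \<Rightarrow> real \<Rightarrow> real \<Rightarrow> real \<Rightarrow> (real \<Rightarrow> 'i \<Rightarrow> real) \<Rightarrow> bool" where
  "holder_rough I \<theta> \<epsilon>0 T Y \<longleftrightarrow>
     (\<exists>L>0. \<forall>\<phi>::'i \<Rightarrow> real. \<forall>s\<in>{0..T}. \<forall>\<epsilon>. 0 < \<epsilon> \<and> \<epsilon> < \<epsilon>0 \<longrightarrow>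
        (\<exists>t\<in>{0..T}. \<bar>t - s\<bar> \<le> \<epsilon> \<and>
           \<bar>\<Sum>i\<in>I. \<phi> i * (Y t i - Y s i)\<bar> \<ge> L * \<epsilon> powr \<theta> * sqrt (\<Sum>i\<in>I. (\<phi> i)\<^sup>2)))"

end

theory Submission
  imports Defs
begin


lemma (in prob_space) indep_sets_reindex:
  assumes ind: "indep_sets F J" and inj: "inj_on e I" and sub: "e ` I \<subseteq> J"
  shows "indep_sets (\<lambda>i. F (e i)) I"
proof (rule indep_setsI)
  fix i assume "i \<in> I" then show "F (e i) \<subseteq> events"
    using ind sub unfolding indep_sets_def by auto
next
  fix A K assume K: "K \<noteq> {}" "K \<subseteq> I" "finite K" and A: "\<forall>j\<in>K. A j \<in> F (e j)"
  define B where "B x = A (the_inv_into K e x)" for x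
  have injK: "inj_on e K" using inj K by (auto intro: inj_on_subset)
  have Bx: "B (e j) = A j" if "j \<in> K" for j
    using the_inv_into_f_f[OF injK that] by (simp add: B_def)
  have "prob (\<Inter>x\<in>e ` K. B x) = (\<Prod>x\<in>e ` K. prob (B x))"
    by (rule indep_setsD[OF ind]) (use K sub A Bx in auto)
  moreover have "(\<Inter>x\<in>e ` K. B x) = (\<Inter>j\<in>K. A j)" using Bx by auto
  moreover have "(\<Prod>x\<in>e ` K. prob (B x)) = (\<Prod>j\<in>K. prob (A j))"
    using Bx by (simp add: prod.reindex[OF injK])
  ultimately show "prob (\<Inter>j\<in>K. A j) = (\<Prod>j\<in>K. prob (A j))" by simp
qed

lemma (in prob_space) indep_vars_reindex:
  assumes ind: "indep_vars M' X J" and inj: "inj_on e I" and sub: "e ` I \<subseteq> J"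
  shows "indep_vars (\<lambda>i. M' (e i)) (\<lambda>i. X (e i)) I"
  using ind sub unfolding indep_vars_def
  by (auto intro!: indep_sets_reindex[OF _ inj sub, where F="\<lambda>i. sigma_sets (space M) {X i -` A \<inter> space M |A. A \<in> sets (M' i)}"])



lemma dm: fixes x b k :: nat assumes "x < k" shows "(b*k + x) div k = b" "(b*k + x) mod k = x"
  using assms by (simp_all add: add.commute[of "b*k"])

lemma ts_mono:
  fixes a h :: real and N n :: nat and g :: "nat \<Rightarrow> real"
  assumes h: "0 < h" and gap: "\<forall>i. Suc i < n \<longrightarrow> g i + real N * h < g (Suc i)"
  defines "ts \<equiv> \<lambda>q. a - g (n - 1 - q div (N+1)) + real (q mod (N+1)) * h"
  assumes q: "q < n * (N+1) - 1"
  shows "ts q < ts (Suc q)"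
proof -
  define b where "b = q div (N+1)"
  define c where "c = q mod (N+1)"
  have qe: "q = b * (N+1) + c" unfolding b_def c_def by (rule div_mult_mod_eq[symmetric])
  have cN: "c \<le> N" using c_def by auto
  show ?thesis
  proof (cases "c = N")
    case False
    then have sq: "Suc q = b * (N+1) + Suc c" using qe by simp
    have "Suc c < N + 1" using False cN by simp
    then have m: "Suc q mod (N+1) = Suc c" and d: "Suc q div (N+1) = b" unfolding sq using dm by blast+
    then show ?thesis using h by (simp add: ts_def b_def c_def)
  next
    case True
    have sq: "Suc q = (Suc b) * (N+1)" using qe True by simp
    have m: "Suc q mod (N+1) = 0" unfolding sq by (metis mod_mult_self2_is_0)
    have d: "Suc q div (N+1) = Suc b" unfolding sq by (metis nonzero_mult_div_cancel_right add_gr_0 zero_less_one less_not_refl2)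
    have "Suc q < n * (N+1)" using q by simp
    then have bn: "Suc b < n" using sq by (metis mult_less_cancel2)
    define i where "i = n - 1 - Suc b"
    have i1: "n - 1 - b = Suc i" using bn by (simp add: i_def)
    have "Suc i < n" using bn i_def by simp
    then have "g i + real N * h < g (Suc i)" using gap by auto
    then show ?thesis using True m d i1 by (simp add: ts_def b_def c_def i_def)
  qed
qed



lemma bm_prob: "two_sided_bm M m W \<Longrightarrow> prob_space M"
  by (simp add: two_sided_bm_def)

lemma bm_incr:
  assumes bm: "two_sided_bm M m W" and k: "k < m" and st: "s < t"
  shows "distributed M lborel (\<lambda>\<omega>. W k t \<omega> - W k s \<omega>) (normal_density 0 (sqrt (t - s)))"
proof -
  define ts where "ts = (\<lambda>i::nat. if i = 0 then s else t)"
  have "\<forall>i<1. ts i < ts (Suc i)" using st by (simp add: ts_def)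
  then have "\<forall>k<m. \<forall>i<1. distributed M lborel (\<lambda>\<omega>. W k (ts (Suc i)) \<omega> - W k (ts i) \<omega>)
                          (normal_density 0 (sqrt (ts (Suc i) - ts i)))"
    using bm unfolding two_sided_bm_def by blast
  then show ?thesis using k by (auto simp: ts_def)
qed

lemma grid_indep:
  fixes a h :: real and N n :: nat and g :: "nat \<Rightarrow> real"
  assumes bm: "two_sided_bm M m W" and h: "0 < h" and n: "0 < n"
    and gap: "\<forall>i. Suc i < n \<longrightarrow> g i + real N * h < g (Suc i)"
  shows "prob_space.indep_vars M (\<lambda>_. borel)
    (\<lambda>(c,l) \<omega>. W (fst c) (a + real (Suc l) * h - g (snd c)) \<omega> - W (fst c) (a + real l * h - g (snd c)) \<omega>)
    (({..<m}\<times>{..<n})\<times>{..<N})"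
proof -
  interpret prob_space M using bm by (rule bm_prob)
  define ts where "ts \<equiv> \<lambda>q. a - g (n - 1 - q div (N+1)) + real (q mod (N+1)) * h"
  define N' where "N' = n * (N+1) - 1"
  have mono: "\<forall>q<N'. ts q < ts (Suc q)"
    using ts_mono[OF h gap] unfolding ts_def N'_def by blast
  have ind: "indep_vars (\<lambda>_. borel) (\<lambda>(k, i) \<omega>. W k (ts (Suc i)) \<omega> - W k (ts i) \<omega>) ({..<m} \<times> {..<N'})"
    using bm mono unfolding two_sided_bm_def by blast
  define e where "e = (\<lambda>(c::nat\<times>nat,l::nat). (fst c, (n - 1 - snd c) * (N+1) + l))"
  have inj: "inj_on e (({..<m}\<times>{..<n})\<times>{..<N})"
  proof (rule inj_onI)
    fix x y assume x: "x \<in> ({..<m}\<times>{..<n})\<times>{..<N}" and y: "y \<in> ({..<m}\<times>{..<n})\<times>{..<N}"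
      and exy: "e x = e y"
    obtain k i l where xe: "x = ((k,i),l)" by (metis prod.exhaust)
    obtain k' i' l' where ye: "y = ((k',i'),l')" by (metis prod.exhaust)
    have l: "l < N+1" "l' < N+1" using x y xe ye by auto
    have eq: "(n - 1 - i) * (N+1) + l = (n - 1 - i') * (N+1) + l'" "k = k'" using exy xe ye by (auto simp: e_def)
    have "n - 1 - i = n - 1 - i'" using dm(1)[OF l(1), of "n-1-i"] dm(1)[OF l(2), of "n-1-i'"] eq(1) by simp
    moreover have "l = l'" using dm(2)[OF l(1), of "n-1-i"] dm(2)[OF l(2), of "n-1-i'"] eq(1) by simp
    moreover have "i < n" "i' < n" using x y xe ye by auto
    ultimately show "x = y" using xe ye eq(2) by auto
  qed
  have sub: "e ` (({..<m}\<times>{..<n})\<times>{..<N}) \<subseteq> {..<m} \<times> {..<N'}"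
  proof (rule image_subsetI)
    fix x assume x: "x \<in> ({..<m}\<times>{..<n})\<times>{..<N}"
    obtain k i l where xe: "x = ((k,i),l)" by (metis prod.exhaust)
    have "k < m" "i < n" "l < N" using x xe by auto
    have "(n - 1 - i) * (N+1) + l < (n - 1 - i) * (N+1) + N" using \<open>l < N\<close> by simp
    also have "\<dots> \<le> (n - 1) * (N+1) + N" by (intro add_right_mono mult_le_mono1) simp
    also have "\<dots> = N'" using n by (cases n) (auto simp: N'_def)
    finally show "e x \<in> {..<m} \<times> {..<N'}" using \<open>k < m\<close> by (simp add: e_def xe)
  qed
  have r: "indep_vars (\<lambda>_. borel) (\<lambda>x. (\<lambda>(k, i) \<omega>. W k (ts (Suc i)) \<omega> - W k (ts i) \<omega>) (e x)) (({..<m}\<times>{..<n})\<times>{..<N})"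
    using indep_vars_reindex[OF ind inj sub] by simp
  show ?thesis
  proof (rule iffD1[OF indep_vars_cong r])
    fix x assume x: "x \<in> ({..<m}\<times>{..<n})\<times>{..<N}"
    obtain k i l where xe: "x = ((k,i),l)" by (metis prod.exhaust)
    have l: "l < N+1" "Suc l < N+1" and i: "i < n" using x xe by auto
    have t0: "ts ((n - 1 - i) * (N+1) + l) = a + real l * h - g i"
      using dm[OF l(1), of "n-1-i"] i by (simp add: ts_def)
    have t1: "ts (Suc ((n - 1 - i) * (N+1) + l)) = a + real (Suc l) * h - g i"
      using dm[OF l(2), of "n-1-i"] i by (simp add: ts_def)
    show "(\<lambda>(k, i) \<omega>. W k (ts (Suc i)) \<omega> - W k (ts i) \<omega>) (e x) =
      (\<lambda>(c,l) \<omega>. W (fst c) (a + real (Suc l) * h - g (snd c)) \<omega> - W (fst c) (a + real l * h - g (snd c)) \<omega>) x"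
      using t0 t1 by (simp add: xe e_def)
  qed auto
qed



lemma normal_density_le: assumes "0 < \<sigma>" shows "normal_density 0 \<sigma> y \<le> 1 / (\<sigma> * sqrt (2*pi))"
proof -
  have "exp (-(y - 0)\<^sup>2/ (2 * \<sigma>\<^sup>2)) \<le> 1" by simp
  moreover have "sqrt (2 * pi * \<sigma>\<^sup>2) = \<sigma> * sqrt (2*pi)" using assms
    by (simp add: real_sqrt_mult mult.commute)
  ultimately show ?thesis using assms unfolding normal_density_def
    by (simp add: divide_right_mono)
qed

lemma (in prob_space) normal_small_prob:
  assumes S: "distributed M lborel S (normal_density 0 \<sigma>)" and s: "0 < \<sigma>" and x: "0 < x"
  shows "prob {\<omega>\<in>space M. \<bar>S \<omega>\<bar> < x} \<le> 2 * x / (\<sigma> * sqrt (2*pi))"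
proof -
  have eq: "{\<omega>\<in>space M. \<bar>S \<omega>\<bar> < x} = S -` {-x<..<x} \<inter> space M" by auto
  have "emeasure M (S -` {-x<..<x} \<inter> space M) = (\<integral>\<^sup>+y. ennreal (normal_density 0 \<sigma> y) * indicator {-x<..<x} y \<partial>lborel)"
    by (rule distributed_emeasure[OF S]) simp
  also have "\<dots> \<le> (\<integral>\<^sup>+y. ennreal (1 / (\<sigma> * sqrt (2*pi))) * indicator {-x<..<x} y \<partial>lborel)"
    by (intro nn_integral_mono) (auto simp: indicator_def intro!: ennreal_leI normal_density_le[OF s])
  also have "\<dots> = ennreal (1 / (\<sigma> * sqrt (2*pi))) * ennreal (2 * x)"
    using x by (subst nn_integral_cmult_indicator) auto
  also have "\<dots> = ennreal (2 * x / (\<sigma> * sqrt (2*pi)))"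
    using x s by (simp add: ennreal_mult'[symmetric])
  finally show ?thesis unfolding eq using x s
    by (simp add: emeasure_eq_measure ennreal_le_iff)
qed



lemma small_ball:
  fixes \<phi> :: "nat\<times>nat \<Rightarrow> real" and a h x :: real
  assumes bm: "two_sided_bm M m W" and h: "0 < h" and n: "0 < n"
    and gap: "\<forall>i. Suc i < n \<longrightarrow> g i + real N * h < g (Suc i)"
    and x: "0 < x" and c0: "c0 \<in> {..<m}\<times>{..<n}" and phi: "1/2 \<le> \<bar>\<phi> c0\<bar>"
  shows "measure M {\<omega>\<in>space M. \<forall>l<N. \<bar>\<Sum>c\<in>{..<m}\<times>{..<n}. \<phi> c *
            (W (fst c) (a + real (Suc l) * h - g (snd c)) \<omega> - W (fst c) (a + real l * h - g (snd c)) \<omega>)\<bar> < x}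
         \<le> (2 * x / sqrt h) ^ N"
proof -
  interpret prob_space M using bm by (rule bm_prob)
  define I where "I = {..<m}\<times>{..<n}"
  define X where "X = (\<lambda>(c,l) \<omega>. W (fst c) (a + real (Suc l) * h - g (snd c)) \<omega> - W (fst c) (a + real l * h - g (snd c)) \<omega>)"
  have Xe: "X (c,l) \<omega> = W (fst c) (a + real (Suc l) * h - g (snd c)) \<omega> - W (fst c) (a + real l * h - g (snd c)) \<omega>" for c l \<omega>
    by (simp add: X_def)
  have ind: "indep_vars (\<lambda>_. borel) X (I\<times>{..<N})"
    unfolding X_def I_def by (rule grid_indep[OF bm h n gap])
  have Xdist: "distributed M lborel (X (c,l)) (normal_density 0 (sqrt h))" if "c \<in> I" for c l
  proof -
    have "fst c < m" using that by (auto simp: I_def)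
    have d: "a + real (Suc l) * h - g (snd c) - (a + real l * h - g (snd c)) = h" by (simp add: algebra_simps)
    have "a + real l * h - g (snd c) < a + real (Suc l) * h - g (snd c)" using h by simp
    from bm_incr[OF bm \<open>fst c < m\<close> this]
    have "distributed M lborel (\<lambda>\<omega>. W (fst c) (a + real (Suc l) * h - g (snd c)) \<omega> - W (fst c) (a + real l * h - g (snd c)) \<omega>) (normal_density 0 (sqrt h))"
      unfolding d .
    moreover have "X (c,l) = (\<lambda>\<omega>. W (fst c) (a + real (Suc l) * h - g (snd c)) \<omega> - W (fst c) (a + real l * h - g (snd c)) \<omega>)"
      by (simp add: X_def)
    ultimately show ?thesis by simp
  qed
  define C where "C = {c\<in>I. \<phi> c \<noteq> 0}"
  have c0C: "c0 \<in> C" using c0 phi by (auto simp: C_def I_def)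
  have finC: "finite C" by (simp add: C_def I_def)
  have CI: "C \<subseteq> I" by (auto simp: C_def)
  define S where "S l \<omega> = (\<Sum>c\<in>C. \<phi> c * X (c,l) \<omega>)" for l \<omega>
  define \<sigma> where "\<sigma> = sqrt (\<Sum>c\<in>C. (\<bar>\<phi> c\<bar> * sqrt h)\<^sup>2)"
  have sig: "sqrt h / 2 \<le> \<sigma>"
  proof -
    have "(\<bar>\<phi> c0\<bar> * sqrt h)\<^sup>2 \<le> (\<Sum>c\<in>C. (\<bar>\<phi> c\<bar> * sqrt h)\<^sup>2)"
      using finC c0C by (intro member_le_sum) auto
    then have "sqrt ((\<bar>\<phi> c0\<bar> * sqrt h)\<^sup>2) \<le> \<sigma>" unfolding \<sigma>_def by (rule real_sqrt_le_mono)
    then have A: "\<bar>\<phi> c0\<bar> * sqrt h \<le> \<sigma>" by simp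
    moreover have "sqrt h / 2 \<le> \<bar>\<phi> c0\<bar> * sqrt h" using mult_right_mono[OF phi, of "sqrt h"] h by simp
    ultimately show ?thesis using A by linarith
  qed
  have "0 < sqrt h / 2" using h by simp
  then have sigpos: "0 < \<sigma>" using sig by linarith
  have Sdist: "distributed M lborel (S l) (normal_density 0 \<sigma>)" if l: "l < N" for l
  proof -
    have i1: "indep_vars (\<lambda>_. borel) (\<lambda>c. X (c,l)) C"
    proof -
      have "indep_vars (\<lambda>c. borel) (\<lambda>c. X ((\<lambda>c. (c,l)) c)) C"
        by (rule indep_vars_reindex[OF ind]) (use CI l in \<open>auto simp: inj_on_def\<close>)
      then show ?thesis by simp
    qed
    have i2: "indep_vars (\<lambda>_. borel) (\<lambda>c \<omega>. 0 + \<phi> c * X (c,l) \<omega>) C"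
      by (rule indep_vars_compose2[OF i1, where Y="\<lambda>c y. 0 + \<phi> c * y"]) auto
    have "distributed M lborel (\<lambda>\<omega>. \<Sum>c\<in>C. 0 + \<phi> c * X (c,l) \<omega>)
        (normal_density (\<Sum>c\<in>C. 0 + \<phi> c * 0) (sqrt (\<Sum>c\<in>C. (\<bar>\<phi> c\<bar> * sqrt h)\<^sup>2)))"
    proof (rule sum_indep_normal[OF finC _ i2])
      show "C \<noteq> {}" using c0C by auto
      fix c assume c: "c \<in> C"
      then show "0 < \<bar>\<phi> c\<bar> * sqrt h" using h by (auto simp: C_def)
      show "distributed M lborel (\<lambda>\<omega>. 0 + \<phi> c * X (c, l) \<omega>) (normal_density (0 + \<phi> c * 0) (\<bar>\<phi> c\<bar> * sqrt h))"
        by (rule normal_density_affine[OF Xdist]) (use c CI h in \<open>auto simp: C_def\<close>)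
    qed
    then show ?thesis unfolding S_def \<sigma>_def by simp
  qed
  have pl: "prob {\<omega>\<in>space M. \<bar>S l \<omega>\<bar> < x} \<le> 2 * x / sqrt h" if "l < N" for l
  proof -
    have "prob {\<omega>\<in>space M. \<bar>S l \<omega>\<bar> < x} \<le> 2 * x / (\<sigma> * sqrt (2*pi))"
      by (rule normal_small_prob[OF Sdist[OF that] sigpos x])
    also have "\<dots> \<le> 2 * x / sqrt h"
    proof -
      have "2 \<le> sqrt (2*pi)" using pi_gt3 by (simp add: real_le_rsqrt)
      then have "(sqrt h / 2) * 2 \<le> \<sigma> * sqrt (2*pi)"
        by (rule mult_mono[OF sig]) (use sigpos in auto)
      then have "sqrt h \<le> \<sigma> * sqrt (2*pi)" by simp
      then show ?thesis using x h sigpos by (intro divide_left_mono) auto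
    qed
    finally show ?thesis .
  qed
  have Seq: "(\<Sum>c\<in>{..<m}\<times>{..<n}. \<phi> c * (W (fst c) (a + real (Suc l) * h - g (snd c)) \<omega> - W (fst c) (a + real l * h - g (snd c)) \<omega>)) = S l \<omega>" for l \<omega>
  proof -
    have "(\<Sum>c\<in>I. \<phi> c * X (c,l) \<omega>) = S l \<omega>" unfolding S_def
      by (rule sum.mono_neutral_right) (auto simp: C_def I_def)
    then show ?thesis by (simp add: I_def Xe)
  qed
  show ?thesis
  proof (cases "N = 0")
    case True then show ?thesis by simp
  next
    case False
    have indS: "indep_vars (\<lambda>_. borel) S {..<N}"
    proof -
      have r: "indep_vars (\<lambda>l. PiM (C\<times>{l}) (\<lambda>_. borel)) (\<lambda>l \<omega>. restrict (\<lambda>i. X i \<omega>) (C\<times>{l})) {..<N}"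
        by (rule indep_vars_restrict[OF ind]) (use CI in \<open>auto simp: disjoint_family_on_def\<close>)
      have "indep_vars (\<lambda>_. borel) (\<lambda>l \<omega>. (\<lambda>v. \<Sum>c\<in>C. \<phi> c * v (c,l)) (restrict (\<lambda>i. X i \<omega>) (C\<times>{l}))) {..<N}"
        by (rule indep_vars_compose2[OF r]) measurable
      then show ?thesis unfolding S_def by simp
    qed
    have "{\<omega>\<in>space M. \<forall>l<N. \<bar>\<Sum>c\<in>{..<m}\<times>{..<n}. \<phi> c *
            (W (fst c) (a + real (Suc l) * h - g (snd c)) \<omega> - W (fst c) (a + real l * h - g (snd c)) \<omega>)\<bar> < x}
        = (\<Inter>l\<in>{..<N}. S l -` {-x<..<x} \<inter> space M)"
      using False unfolding Seq by (auto simp: abs_less_iff)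
    also have "prob \<dots> = (\<Prod>l\<in>{..<N}. prob (S l -` {-x<..<x} \<inter> space M))"
      by (rule indep_varsD_finite[OF indS]) (use False in auto)
    also have "\<dots> \<le> (\<Prod>l\<in>{..<N}. 2 * x / sqrt h)"
    proof (rule prod_mono)
      fix l assume "l \<in> {..<N}"
      moreover have "S l -` {-x<..<x} \<inter> space M = {\<omega>\<in>space M. \<bar>S l \<omega>\<bar> < x}" by (auto simp: abs_less_iff)
      ultimately show "0 \<le> prob (S l -` {-x<..<x} \<inter> space M) \<and> prob (S l -` {-x<..<x} \<inter> space M) \<le> 2 * x / sqrt h"
        using pl by auto
    qed
    finally show ?thesis by simp
  qed
qed



lemma (in prob_space) normal_tail:
  assumes D: "distributed M lborel X (normal_density 0 \<sigma>)" and s: "0 < \<sigma>" and R: "0 < R"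
  shows "prob {\<omega>\<in>space M. R \<le> \<bar>X \<omega>\<bar>} \<le> \<sigma>\<^sup>2 / R\<^sup>2"
proof -
  have mX: "X \<in> measurable M borel"
    using distributed_measurable[OF D] by (simp add: measurable_lborel1 cong: measurable_cong_sets)
  have int: "integrable M (\<lambda>x. X x ^ 2)"
  proof -
    have "integrable lborel (\<lambda>x. normal_density 0 \<sigma> x * (x - 0)^2)"
      by (rule integrable_normal_moment) (use s in auto)
    then show ?thesis
      using distributed_integrable[OF D, of "\<lambda>x. x^2"] by simp
  qed
  have "prob {x\<in>space M. \<bar>X x - expectation X\<bar> \<ge> R} \<le> variance X / R\<^sup>2"
    by (rule Chebyshev_inequality[OF mX int R])
  then show ?thesis
    using normal_distributed_expectation[OF s D] normal_distributed_variance[OF s D] by simp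
qed

lemma tail_prob:
  assumes bm: "two_sided_bm M m W" and k: "k < m" and st: "s < t" and R: "0 < R"
  shows "measure M {\<omega>\<in>space M. R \<le> \<bar>W k t \<omega> - W k s \<omega>\<bar>} \<le> (t - s) / R\<^sup>2"
proof -
  interpret prob_space M using bm by (rule bm_prob)
  show ?thesis using normal_tail[OF bm_incr[OF bm k st] _ R] st by simp
qed



lemma choose_r:
  fixes ll T s \<epsilon> :: real and j :: nat
  assumes l: "0 < ll" and T: "T = 2^j * ll" and le: "ll \<le> \<epsilon>/2" and eps: "\<epsilon> < T/2"
    and s: "0 \<le> s" "s \<le> T"
  shows "\<exists>r::nat. r < 2^j \<and> s - \<epsilon> \<le> real r * ll \<and> real r * ll + ll \<le> s + \<epsilon> \<and> real r * ll + ll \<le> T"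
proof (cases "s \<le> T/2")
  case True
  define r where "r = nat \<lceil>s / ll\<rceil>"
  have r1: "s / ll \<le> real r" using s l by (simp add: r_def)
  have r2: "real r < s / ll + 1" using s l by (simp add: r_def) linarith
  have a1: "s \<le> real r * ll" using r1 l by (simp add: divide_le_eq)
  have a2: "real r * ll < s + ll" using r2 l by (simp add: less_divide_eq field_simps)
  have b: "real r * ll + ll \<le> s + \<epsilon>" using a2 le by linarith
  have c: "real r * ll + ll \<le> T" using b True eps by linarith
  have "real (r + 1) * ll \<le> 2^j * ll" using c T by (simp add: algebra_simps)
  then have "real (r+1) \<le> 2^j" using l by simp
  then have "r < 2^j" by (metis Suc_eq_plus1 Suc_le_eq of_nat_le_iff of_nat_numeral of_nat_power)
  then show ?thesis using a1 b c eps l by (intro exI[of _ r]) auto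
next
  case False
  define q where "q = \<lfloor>s / ll\<rfloor>"
  have eps0: "0 < \<epsilon>" using l le by linarith
  have "T/2 < s" using False by simp
  have "2 < s / ll"
  proof -
    have "2 * ll < s" using le eps \<open>T/2 < s\<close> by linarith
    then show ?thesis using l by (simp add: less_divide_eq)
  qed
  then have q2: "2 \<le> q" unfolding q_def by linarith
  define r where "r = nat (q - 1)"
  have rq: "real r = real_of_int q - 1" using q2 by (simp add: r_def)
  have f1: "real_of_int q \<le> s / ll" "s / ll < real_of_int q + 1" unfolding q_def by linarith+
  have f1': "real_of_int q * ll \<le> s" using f1(1) l by (simp add: le_divide_eq)
  have f2': "s < (real_of_int q + 1) * ll" using f1(2) l by (simp add: divide_less_eq)
  have qq: "real_of_int q = real r + 1" using rq by simp
  have "s < (real r + 1 + 1) * ll" using f2' unfolding qq .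
  then have "s < real r * ll + 2 * ll" by (simp add: algebra_simps)
  then have a1: "s - \<epsilon> \<le> real r * ll" using le by linarith
  have "(real r + 1) * ll \<le> s" using f1' unfolding qq .
  then have b: "real r * ll + ll \<le> s" by (simp add: algebra_simps)

  have c: "real r * ll + ll \<le> T" using b s by linarith
  have "real (r + 1) * ll \<le> 2^j * ll" using c T by (simp add: algebra_simps)
  then have "real (r+1) \<le> 2^j" using l by simp
  then have "r < 2^j" by (metis Suc_eq_plus1 Suc_le_eq of_nat_le_iff of_nat_numeral of_nat_power)
  then show ?thesis using a1 b c eps0 by (intro exI[of _ r]) auto
qed

lemma choose_scale:
  fixes T \<epsilon> \<theta> :: real and J :: nat
  assumes T: "0 < T" and J: "2 \<le> J" and e: "0 < \<epsilon>" "\<epsilon> < T/2" and th: "0 < \<theta>"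
  shows "\<exists>j\<ge>J. T/2^j \<le> \<epsilon>/2 \<and> (1/2^J) powr \<theta> * \<epsilon> powr \<theta> \<le> (T/2^j) powr \<theta>"
proof -
  obtain j' :: nat where j': "T / (\<epsilon>/2) < 2^j'" using real_arch_pow[of 2 "T / (\<epsilon>/2)"] by auto
  have ex: "T/2^j' \<le> \<epsilon>/2" using j' e by (simp add: field_simps)
  define j1 where "j1 = (LEAST j::nat. T/2^j \<le> \<epsilon>/2)"
  have j1: "T/2^j1 \<le> \<epsilon>/2" unfolding j1_def by (rule LeastI[where P="\<lambda>j. T/2^j \<le> \<epsilon>/2", OF ex])

  show ?thesis
  proof (cases "J \<le> j1")
    case True
    have "j1 \<noteq> 0" using j1 e by (intro notI) simp
    then obtain p where p: "j1 = Suc p" by (cases j1) auto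
    have "\<not> (T/2^p \<le> \<epsilon>/2)" using not_less_Least[of p "\<lambda>j. T/2^j \<le> \<epsilon>/2"] p unfolding j1_def by simp
    then have "\<epsilon>/4 < T/2^j1" using p by (simp add: field_simps)
    then have "(\<epsilon>/4) powr \<theta> \<le> (T/2^j1) powr \<theta>" using e th by (intro powr_mono2) auto
    moreover have "(1/2^J) powr \<theta> * \<epsilon> powr \<theta> \<le> (\<epsilon>/4) powr \<theta>"
    proof -
      have "(1/2^J :: real) \<le> 1/4"
      proof -
        have "(4::real) \<le> 2^J" using J by (metis numeral_Bit0 numeral_One one_add_one power2_eq_square power_increasing[of 2 J "2::real"] power_one_right mult_2 one_le_numeral) 
        then show ?thesis by (simp add: field_simps)
      qed
      then have "(1/2^J) * \<epsilon> \<le> (1/4) * \<epsilon>" using e by (intro mult_right_mono) auto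
      then have "((1/2^J) * \<epsilon>) powr \<theta> \<le> (\<epsilon>/4) powr \<theta>" using e th by (intro powr_mono2) auto

      moreover have "((1/2^J) * \<epsilon>) powr \<theta> = (1/2^J) powr \<theta> * \<epsilon> powr \<theta>"
        by (rule powr_mult)
      ultimately show ?thesis by linarith


    qed
    ultimately show ?thesis using True j1 by (intro exI[of _ j1]) auto
  next
    case False
    have "T/2^J \<le> T/2^j1" using False T by (intro divide_left_mono) auto
    then have a: "T/2^J \<le> \<epsilon>/2" using j1 by linarith
    have "((1/2^J) * \<epsilon>) powr \<theta> \<le> (T/2^J) powr \<theta>" using e T th by (intro powr_mono2) (auto simp: field_simps)
    moreover have "((1/2^J) * \<epsilon>) powr \<theta> = (1/2^J) powr \<theta> * \<epsilon> powr \<theta>"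
      by (rule powr_mult)
    ultimately have "(1/2^J) powr \<theta> * \<epsilon> powr \<theta> \<le> (T/2^J) powr \<theta>" by linarith

    then show ?thesis using a by (intro exI[of _ J]) auto
  qed
qed



lemma round_bound:
  fixes x :: real and Z :: int
  assumes "\<bar>x\<bar> \<le> real_of_int Z"
  shows "-Z \<le> round x \<and> round x \<le> Z"
proof -
  have "round x \<le> round (real_of_int Z)" using assms by (intro round_mono) auto
  moreover have "round (real_of_int (-Z)) \<le> round x" using assms by (intro round_mono) auto
  ultimately show ?thesis unfolding round_of_int by simp
qed

lemma det:
  fixes Y :: "real \<Rightarrow> 'c \<Rightarrow> real" and I :: "'c set" and T \<theta> :: real and N J :: nat
    and tt :: "nat \<Rightarrow> nat \<Rightarrow> nat \<Rightarrow> real"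
  assumes I: "finite I" "I \<noteq> {}" and T: "0 < T" and th: "0 < \<theta>" and N: "0 < N" and J: "2 \<le> J"
   and tt: "\<And>j r l. tt j r l = real r * (T/2^j) + real l * (T/2^j/N)"
   and H1: "\<And>j r c l. J \<le> j \<Longrightarrow> r < 2^j \<Longrightarrow> c \<in> I \<Longrightarrow> l < N \<Longrightarrow> \<bar>Y (tt j r (Suc l)) c - Y (tt j r l) c\<bar> < 2^j"
   and H2: "\<And>j r z. J \<le> j \<Longrightarrow> r < 2^j \<Longrightarrow> z \<in> I \<rightarrow>\<^sub>E {-((8::int)^j)..8^j} \<Longrightarrow>
              (\<exists>c\<in>I. 1/2 \<le> \<bar>real_of_int (z c)\<bar> / 8^j) \<Longrightarrow>
              \<exists>l<N. 4 * (T/2^j) powr \<theta> \<le> \<bar>\<Sum>c\<in>I. (real_of_int (z c) / 8^j) * (Y (tt j r (Suc l)) c - Y (tt j r l) c)\<bar>"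
   and H3: "\<And>j. J \<le> j \<Longrightarrow> real (card I) * 2^j / 8^j \<le> (T/2^j) powr \<theta>"
  shows "holder_rough I \<theta> (T/2) T Y"
  unfolding holder_rough_def
proof -
  define L where "L = (1/2^J) powr \<theta> / sqrt (real (card I))"
  have cardpos: "0 < card I" using I by (simp add: card_gt_0_iff)
  have Lpos: "0 < L" unfolding L_def using cardpos by simp
  show "\<exists>L>0. \<forall>\<phi>. \<forall>s\<in>{0..T}. \<forall>\<epsilon>. 0 < \<epsilon> \<and> \<epsilon> < T / 2 \<longrightarrow>
         (\<exists>t\<in>{0..T}. \<bar>t - s\<bar> \<le> \<epsilon> \<and> L * \<epsilon> powr \<theta> * sqrt (\<Sum>i\<in>I. (\<phi> i)\<^sup>2) \<le> \<bar>\<Sum>i\<in>I. \<phi> i * (Y t i - Y s i)\<bar>)"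
  proof (intro exI[of _ L] conjI allI ballI impI Lpos)
    fix \<phi> :: "'c \<Rightarrow> real" and s \<epsilon> :: real
    assume s: "s \<in> {0..T}" and e: "0 < \<epsilon> \<and> \<epsilon> < T / 2"
    define Mx where "Mx = Max ((\<lambda>c. \<bar>\<phi> c\<bar>) ` I)"
    have Mxge: "\<bar>\<phi> c\<bar> \<le> Mx" if "c \<in> I" for c unfolding Mx_def using I that by (intro Max_ge) auto
    have "Mx \<in> (\<lambda>c. \<bar>\<phi> c\<bar>) ` I" unfolding Mx_def using I by (intro Max_in) auto
    then obtain c0 where c0: "c0 \<in> I" "\<bar>\<phi> c0\<bar> = Mx" by auto

    show "\<exists>t\<in>{0..T}. \<bar>t - s\<bar> \<le> \<epsilon> \<and> L * \<epsilon> powr \<theta> * sqrt (\<Sum>i\<in>I. (\<phi> i)\<^sup>2) \<le> \<bar>\<Sum>i\<in>I. \<phi> i * (Y t i - Y s i)\<bar>"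
    proof (cases "Mx = 0")
      case True
      then have "\<phi> c = 0" if "c \<in> I" for c using Mxge[OF that] by simp
      then have "(\<Sum>i\<in>I. (\<phi> i)\<^sup>2) = 0" by simp
      then show ?thesis using s e by (intro bexI[of _ s]) auto
    next
      case False
      then have Mpos: "0 < Mx" using c0 by (metis abs_ge_zero order_le_less)
      define \<psi> where "\<psi> c = \<phi> c / Mx" for c
      have psi1: "\<bar>\<psi> c\<bar> \<le> 1" if "c \<in> I" for c using Mxge[OF that] Mpos by (simp add: \<psi>_def abs_div)
      have psic0: "\<bar>\<psi> c0\<bar> = 1" using c0 Mpos by (simp add: \<psi>_def abs_div)
      obtain j where j: "J \<le> j" "T/2^j \<le> \<epsilon>/2" and jK: "(1/2^J) powr \<theta> * \<epsilon> powr \<theta> \<le> (T/2^j) powr \<theta>"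
        using choose_scale[OF T J _ _ th] e by blast
      define ll where "ll = T/2^j"
      have llpos: "0 < ll" using T by (simp add: ll_def)
      have Tll: "T = 2^j * ll" by (simp add: ll_def)
      obtain r :: nat where r: "r < 2^j" "s - \<epsilon> \<le> real r * ll" "real r * ll + ll \<le> s + \<epsilon>" "real r * ll + ll \<le> T"
        using choose_r[OF llpos Tll _ _ ] j(2) e s unfolding ll_def by auto
      define K where "K = ll powr \<theta>"
      define z where "z c = (if c \<in> I then round (\<psi> c * 8^j) else undefined)" for c
      have zb: "-((8::int)^j) \<le> z c \<and> z c \<le> 8^j" if "c \<in> I" for c
      proof -
        have "\<bar>\<psi> c * 8^j\<bar> \<le> real_of_int ((8::int)^j)"
          using psi1[OF that] by (simp add: abs_mult)
        then show ?thesis using round_bound that by (simp add: z_def)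
      qed
      have zPi: "z \<in> I \<rightarrow>\<^sub>E {-((8::int)^j)..8^j}" using zb by (auto simp: z_def)
      have zerr: "\<bar>\<psi> c - real_of_int (z c) / 8^j\<bar> \<le> 1 / (2 * 8^j)" if "c \<in> I" for c
      proof -
        have "\<bar>real_of_int (round (\<psi> c * 8^j)) - \<psi> c * 8^j\<bar> \<le> 1/2" by (rule of_int_round_abs_le)
        then have e0: "\<bar>real_of_int (z c) - \<psi> c * 8^j\<bar> \<le> 1/2" using that by (simp add: z_def)
        have "\<bar>real_of_int (z c) - \<psi> c * 8^j\<bar> / 8^j \<le> (1/2) / 8^j"
          by (rule divide_right_mono[OF e0]) simp
        moreover have "\<bar>(real_of_int (z c) - \<psi> c * 8^j) / 8^j\<bar> = \<bar>real_of_int (z c) - \<psi> c * 8^j\<bar> / 8^j"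
          by (simp add: abs_div)
        ultimately have "\<bar>(real_of_int (z c) - \<psi> c * 8^j) / 8^j\<bar> \<le> (1/2) / 8^j" by linarith

        moreover have "(real_of_int (z c) - \<psi> c * 8^j) / 8^j = real_of_int (z c) / 8^j - \<psi> c"
          by (simp add: field_simps)
        ultimately show ?thesis by (simp add: abs_minus_commute)
      qed
      have zc0: "1/2 \<le> \<bar>real_of_int (z c0)\<bar> / 8^j"
      proof -
        have "1 / (2 * 8^j) \<le> (1/2::real)" by (simp add: field_simps)
        then have "1/2 \<le> \<bar>real_of_int (z c0) / 8^j\<bar>" using zerr[OF c0(1)] psic0 by linarith
        then show ?thesis by (simp add: abs_div)
      qed
      obtain l where l: "l < N" and lK: "4 * K \<le> \<bar>\<Sum>c\<in>I. (real_of_int (z c) / 8^j) * (Y (tt j r (Suc l)) c - Y (tt j r l) c)\<bar>"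
        using H2[OF j(1) r(1) zPi] c0(1) zc0 unfolding K_def ll_def by blast
      define D where "D c = Y (tt j r (Suc l)) c - Y (tt j r l) c" for c
      have Dle: "\<bar>D c\<bar> < 2^j" if "c \<in> I" for c using H1[OF j(1) r(1) that l] by (simp add: D_def)
      have H3': "real (card I) * 2^j / 8^j \<le> K" using H3[OF j(1)] by (simp add: K_def ll_def)
      have err: "\<bar>\<Sum>c\<in>I. (\<psi> c - real_of_int (z c) / 8^j) * D c\<bar> \<le> K / 2"
      proof -
        have "\<bar>\<Sum>c\<in>I. (\<psi> c - real_of_int (z c) / 8^j) * D c\<bar> \<le> (\<Sum>c\<in>I. \<bar>(\<psi> c - real_of_int (z c) / 8^j) * D c\<bar>)"
          by (rule sum_abs)
        also have "\<dots> \<le> (\<Sum>c\<in>I. (1 / (2 * 8^j)) * 2^j)"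
        proof (rule sum_mono)
          fix c assume c: "c \<in> I"
          show "\<bar>(\<psi> c - real_of_int (z c) / 8^j) * D c\<bar> \<le> (1 / (2 * 8^j)) * 2^j"
            unfolding abs_mult using zerr[OF c] Dle[OF c] by (intro mult_mono) auto
        qed
        also have "\<dots> = (real (card I) * 2^j / 8^j) / 2" by simp
        also have "\<dots> \<le> K / 2" using H3' by simp
        finally show ?thesis .
      qed
      have split: "(\<Sum>c\<in>I. \<psi> c * D c) = (\<Sum>c\<in>I. (real_of_int (z c) / 8^j) * D c) + (\<Sum>c\<in>I. (\<psi> c - real_of_int (z c) / 8^j) * D c)"
        by (simp add: sum.distrib[symmetric] algebra_simps)
      have psiD: "2 * K \<le> \<bar>\<Sum>c\<in>I. \<psi> c * D c\<bar>"
      proof -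
        have K0: "0 \<le> K" by (simp add: K_def)
        have aux: "\<And>a b::real. 4*K \<le> \<bar>a\<bar> \<Longrightarrow> \<bar>b\<bar> \<le> K/2 \<Longrightarrow> 2*K \<le> \<bar>a+b\<bar>" using K0 by arith
        show ?thesis unfolding split
        proof (rule aux[OF _ err])
          show "4 * K \<le> \<bar>\<Sum>c\<in>I. real_of_int (z c) / 8 ^ j * D c\<bar>" using lK by (simp add: D_def)
        qed


      qed

      have phiD: "(\<Sum>c\<in>I. \<phi> c * D c) = Mx * (\<Sum>c\<in>I. \<psi> c * D c)"
        using Mpos by (simp add: sum_distrib_left \<psi>_def)
      have phiD2: "2 * K * Mx \<le> \<bar>\<Sum>c\<in>I. \<phi> c * D c\<bar>"
        using psiD Mpos unfolding phiD abs_mult by (simp add: mult.commute mult_right_mono)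
      define t1 where "t1 = tt j r (Suc l)"
      define t0 where "t0 = tt j r l"
      have AB: "(\<Sum>c\<in>I. \<phi> c * D c) = (\<Sum>i\<in>I. \<phi> i * (Y t1 i - Y s i)) - (\<Sum>i\<in>I. \<phi> i * (Y t0 i - Y s i))"
        by (simp add: D_def t1_def t0_def sum_subtractf[symmetric] algebra_simps)
      have ttin: "real r * ll \<le> tt j r l' \<and> tt j r l' \<le> real r * ll + ll" if "l' \<le> N" for l'
      proof -
        have "real l' * (ll / N) \<le> real N * (ll / N)" using that llpos by (intro mult_right_mono) auto
        then have "real l' * (ll / N) \<le> ll" using N by simp
        moreover have "0 \<le> real l' * (ll / N)" using llpos by simp
        ultimately show ?thesis by (simp add: tt ll_def)
      qed
      have rll0: "0 \<le> real r * ll" using llpos by simp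
      have tgood: "t \<in> {0..T} \<and> \<bar>t - s\<bar> \<le> \<epsilon>" if "t = t0 \<or> t = t1" for t
      proof -
        have "real r * ll \<le> t \<and> t \<le> real r * ll + ll" using that ttin[of l] ttin[of "Suc l"] l
          unfolding t0_def t1_def by auto
        then have "0 \<le> t" "t \<le> T" "t - s \<le> \<epsilon>" "s - t \<le> \<epsilon>" using r rll0 by linarith+
        then show ?thesis by (simp add: abs_le_iff)

      qed
      have bound: "L * \<epsilon> powr \<theta> * sqrt (\<Sum>i\<in>I. (\<phi> i)\<^sup>2) \<le> K * Mx"
      proof -
        have "(\<Sum>i\<in>I. (\<phi> i)\<^sup>2) \<le> (\<Sum>i\<in>I. Mx\<^sup>2)"
          using Mxge by (intro sum_mono) (metis abs_ge_zero power2_abs power_mono)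
        then have "sqrt (\<Sum>i\<in>I. (\<phi> i)\<^sup>2) \<le> sqrt (real (card I) * Mx\<^sup>2)" by simp
        also have "\<dots> = sqrt (real (card I)) * Mx" using Mpos by (simp add: real_sqrt_mult)
        finally have sq: "sqrt (\<Sum>i\<in>I. (\<phi> i)\<^sup>2) \<le> sqrt (real (card I)) * Mx" .
        have "L * \<epsilon> powr \<theta> * sqrt (\<Sum>i\<in>I. (\<phi> i)\<^sup>2) \<le> L * \<epsilon> powr \<theta> * (sqrt (real (card I)) * Mx)"
          using sq Lpos by (intro mult_left_mono) auto
        also have "\<dots> = ((1/2^J) powr \<theta> * \<epsilon> powr \<theta>) * Mx"
          using cardpos by (simp add: L_def)
        also have "\<dots> \<le> K * Mx" using jK Mpos by (intro mult_right_mono) (auto simp: K_def ll_def)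
        finally show ?thesis .
      qed
      have "K * Mx \<le> \<bar>\<Sum>i\<in>I. \<phi> i * (Y t1 i - Y s i)\<bar> \<or> K * Mx \<le> \<bar>\<Sum>i\<in>I. \<phi> i * (Y t0 i - Y s i)\<bar>"
        using phiD2 unfolding AB by linarith
      then show ?thesis
      proof
        assume a: "K * Mx \<le> \<bar>\<Sum>i\<in>I. \<phi> i * (Y t1 i - Y s i)\<bar>"
        show ?thesis using tgood[of t1] bound a by (intro bexI[of _ t1]) auto
      next
        assume a: "K * Mx \<le> \<bar>\<Sum>i\<in>I. \<phi> i * (Y t0 i - Y s i)\<bar>"
        show ?thesis using tgood[of t0] bound a by (intro bexI[of _ t0]) auto
      qed

    qed
  qed
qed



lemma numeric:
  fixes T \<theta> :: real and N d j :: nat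
  assumes T: "0 < T" and th: "1/2 < \<theta>" and N: "0 < N" and Nm: "3 * real d + 3 \<le> real N * (\<theta> - 1/2)"
  shows "2^j * (2*8^j+1)^d * (8 * (T/2^j) powr \<theta> / sqrt (T/2^j/real N))^N
         \<le> 3^d * (8 * sqrt N * T powr (\<theta> - 1/2))^N * (1/2)^j"
proof -
  define \<mu> where "\<mu> = \<theta> - 1/2"
  have mu: "0 < \<mu>" using th by (simp add: \<mu>_def)
  define ll where "ll = T/2^j"
  have llpos: "0 < ll" using T by (simp add: ll_def)
  define q :: real where "q = 1/2^j"
  have qpos: "0 < q" and q1: "q \<le> 1" by (simp_all add: q_def)
  have llq: "ll = T * q" by (simp add: ll_def q_def)
  have e1: "8 * ll powr \<theta> / sqrt (ll/real N) = 8 * sqrt N * T powr \<mu> * q powr \<mu>"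
  proof -
    have "sqrt (ll/real N) = ll powr (1/2) / sqrt N" using llpos by (simp add: powr_half_sqrt real_sqrt_divide)
    then have "8 * ll powr \<theta> / sqrt (ll/real N) = 8 * sqrt N * (ll powr \<theta> / ll powr (1/2))"
      using N llpos by (simp add: field_simps)
    also have "ll powr \<theta> / ll powr (1/2) = ll powr \<mu>" by (simp add: \<mu>_def powr_diff)
    also have "ll powr \<mu> = T powr \<mu> * q powr \<mu>" by (simp add: llq powr_mult)
    finally show ?thesis by simp
  qed
  have e2: "(q powr \<mu>)^N \<le> q^(3*d+3)"
  proof -
    have "(q powr \<mu>)^N = q powr (real N * \<mu>)" using qpos by (simp add: powr_power)
    also have "\<dots> \<le> q powr (real (3*d+3))" using Nm qpos q1 by (intro powr_mono') (auto simp: \<mu>_def)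
    also have "\<dots> = q^(3*d+3)" using qpos by (rule powr_realpow)
    finally show ?thesis .
  qed
  define A where "A = (8 * sqrt N * T powr \<mu>)"
  have A0: "0 \<le> A" by (simp add: A_def)
  have "(8 * ll powr \<theta> / sqrt (ll/real N))^N = A^N * (q powr \<mu>)^N"
    unfolding e1 A_def by (simp add: power_mult_distrib)
  also have "\<dots> \<le> A^N * q^(3*d+3)" using e2 A0 by (intro mult_left_mono) auto
  finally have b1: "(8 * ll powr \<theta> / sqrt (ll/real N))^N \<le> A^N * q^(3*d+3)" .
  have b2: "(2*8^j+1::real)^d \<le> (3*8^j)^d"
  proof -
    have "(1::real) \<le> 8^j" by simp
    then show ?thesis by (intro power_mono) auto
  qed
  have "(2::real)^j * (2*8^j+1)^d * (8 * ll powr \<theta> / sqrt (ll/real N))^N \<le> 2^j * (3*8^j)^d * (A^N * q^(3*d+3))"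
    using b1 b2 llpos by (intro mult_mono) auto

  also have "\<dots> = 3^d * A^N * ((2^j * 8^(j*d)) * q^(3*d+3))"
    by (simp add: power_mult_distrib power_mult[symmetric] mult.commute mult.left_commute)

  also have "(2::real)^j * 8^(j*d) * q^(3*d+3) = (1/2)^j * (1/2)^j"
  proof -
    have "(8::real)^(j*d) = 2^(3*j*d)" by (simp add: power_mult)
    moreover have "q^(3*d+3) = 1 / 2^(j*(3*d+3))" by (simp add: q_def power_mult[symmetric] power_one_over mult.commute)
    moreover have "(2::real)^(j*(3*d+3)) = 2^j * 2^(3*j*d) * (2^j * 2^j)"
      by (simp add: power_add[symmetric] algebra_simps)
    ultimately show ?thesis by (simp add: power_one_over)
  qed
  also have "3^d * A^N * ((1/2)^j * (1/2)^j) \<le> 3^d * A^N * (1/2::real)^j"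
    using A0 by (intro mult_left_mono) (auto simp: power_le_one)
  finally show ?thesis unfolding A_def \<mu>_def ll_def by simp
qed



lemma gap_exists:
  fixes g :: "nat \<Rightarrow> real"
  assumes "\<forall>i. Suc i < n \<longrightarrow> g i < g (Suc i)"
  shows "\<exists>\<gamma>>0. \<forall>i. Suc i < n \<longrightarrow> g i + \<gamma> \<le> g (Suc i)"
proof -
  define G where "G = (\<lambda>i. g (Suc i) - g i) ` {i. Suc i < n}"
  have fin: "finite G" unfolding G_def by (rule finite_imageI) (rule finite_subset[of _ "{..<n}"], auto)
  define \<gamma> where "\<gamma> = Min (insert 1 G)"
  have pos: "0 < \<gamma>" unfolding \<gamma>_def using fin assms by (auto simp: G_def)
  have "g i + \<gamma> \<le> g (Suc i)" if "Suc i < n" for i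
  proof -
    have "\<gamma> \<le> g (Suc i) - g i" unfolding \<gamma>_def using fin that by (intro Min_le) (auto simp: G_def)
    then show ?thesis by simp
  qed
  then show ?thesis using pos by blast
qed

lemma incr_meas:
  assumes bm: "two_sided_bm M m W" and k: "k < m" and st: "s < t"
  shows "(\<lambda>\<omega>. W k t \<omega> - W k s \<omega>) \<in> borel_measurable M"
  using distributed_measurable[OF bm_incr[OF bm k st]]
  by (simp add: measurable_lborel1 cong: measurable_cong_sets)

lemma sets_all_less:
  fixes f :: "nat \<Rightarrow> 'a \<Rightarrow> real"

  assumes "\<And>l. l < N \<Longrightarrow> f l \<in> borel_measurable M"
  shows "{\<omega>\<in>space M. \<forall>l<N. \<bar>f l \<omega>\<bar> < x} \<in> sets M"
proof -
  have "{\<omega>\<in>space M. \<forall>l\<in>{..<N}. \<bar>f l \<omega>\<bar> < x} \<in> sets M"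
  proof (rule sets.sets_Collect_finite_All)
    fix l assume "l \<in> {..<N}"
    then have [measurable]: "f l \<in> borel_measurable M" using assms by auto
    show "{\<omega>\<in>space M. \<bar>f l \<omega>\<bar> < x} \<in> sets M" by measurable
  qed simp
  moreover have "{\<omega>\<in>space M. \<forall>l<N. \<bar>f l \<omega>\<bar> < x} = {\<omega>\<in>space M. \<forall>l\<in>{..<N}. \<bar>f l \<omega>\<bar> < x}" by auto
  ultimately show ?thesis by simp
qed




theorem lemma2p4:
  fixes M :: "'a measure" and W :: "nat \<Rightarrow> real \<Rightarrow> 'a \<Rightarrow> real"
    and m n :: nat and g :: "nat \<Rightarrow> real" and T \<alpha> \<theta> :: real
  assumes "two_sided_bm M m W"
    and "T > 0" and "1/3 < \<alpha>" and "\<alpha> < 1/2"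
    and "0 < n" and "g 0 = 0" and "\<forall>i. Suc i < n \<longrightarrow> g i < g (Suc i)"
    and "1/2 < \<theta>" and "\<theta> < 2 * \<alpha>"
  shows "AE \<omega> in M. holder_rough ({..<m} \<times> {..<n}) \<theta> (T / 2) T
                        (\<lambda>t (k, i). W k (t - g i) \<omega>)"
proof -
  note bm = assms(1)
  have T: "0 < T" using assms(2) .
  have n: "0 < n" using assms(5) .
  have th: "1/2 < \<theta>" "\<theta> \<le> 1" using assms by auto
  interpret prob_space M using bm by (rule bm_prob)
  show ?thesis
  proof (cases "m = 0")
    case True
    have "holder_rough ({..<m} \<times> {..<n}) \<theta> (T / 2) T Y" for Y :: "real \<Rightarrow> nat \<times> nat \<Rightarrow> real"
      unfolding holder_rough_def
    proof (intro exI[of _ 1] conjI allI ballI impI)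
      fix \<phi> :: "nat\<times>nat \<Rightarrow> real" and s \<epsilon> :: real assume s: "s \<in> {0..T}" and e: "0 < \<epsilon> \<and> \<epsilon> < T/2"
      show "\<exists>t\<in>{0..T}. \<bar>t - s\<bar> \<le> \<epsilon> \<and> 1 * \<epsilon> powr \<theta> * sqrt (\<Sum>i\<in>{..<m} \<times> {..<n}. (\<phi> i)\<^sup>2) \<le> \<bar>\<Sum>i\<in>{..<m} \<times> {..<n}. \<phi> i * (Y t i - Y s i)\<bar>"
        using s e True by (intro bexI[of _ s]) auto
    qed simp
    then show ?thesis by simp
  next
    case False
    then have m: "0 < m" by simp
    define I where "I = {..<m}\<times>{..<n}"
    have finI: "finite I" and Ine: "I \<noteq> {}" using m n by (auto simp: I_def)
    define d where "d = card I"
    have dpos: "0 < d" using finI Ine by (simp add: d_def card_gt_0_iff)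
    obtain \<gamma> where \<gamma>: "0 < \<gamma>" "\<forall>i. Suc i < n \<longrightarrow> g i + \<gamma> \<le> g (Suc i)"
      using gap_exists[OF assms(7)] by blast
    define \<mu> where "\<mu> = \<theta> - 1/2"
    have mu: "0 < \<mu>" using th by (simp add: \<mu>_def)
    define N :: nat where "N = nat \<lceil>(3*real d+3)/\<mu>\<rceil> + 1"
    have N: "0 < N" by (simp add: N_def)
    have Nm: "3 * real d + 3 \<le> real N * (\<theta> - 1/2)"
    proof -
      have "(3*real d+3)/\<mu> \<le> real N" unfolding N_def by linarith
      then show ?thesis using mu by (simp add: \<mu>_def divide_le_eq)
    qed
    obtain j1 :: nat where j1: "T/\<gamma> < 2^j1" using real_arch_pow[of 2 "T/\<gamma>"] by auto
    obtain j2 :: nat where j2: "real d / T powr \<theta> < 2^j2" using real_arch_pow[of 2 "real d / T powr \<theta>"] by auto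
    define j0 where "j0 = max 2 (max j1 j2)"
    have j02: "2 \<le> j0" by (simp add: j0_def)
    have ell: "T/2^j < \<gamma>" if "j0 \<le> j" for j
    proof -
      have "(2::real)^j1 \<le> 2^j" using that by (intro power_increasing) (auto simp: j0_def)
      then have "T/\<gamma> < 2^j" using j1 by linarith
      then show ?thesis using \<gamma>(1) by (simp add: field_simps)
    qed
    have H3: "real d * 2^j / 8^j \<le> (T/2^j) powr \<theta>" if "j0 \<le> j" for j
    proof -
      have "(2::real)^j2 \<le> 2^j" using that by (intro power_increasing) (auto simp: j0_def)
      have Tp: "0 < T powr \<theta>" using T by simp
      have "real d < 2^j2 * T powr \<theta>" using j2 Tp by (simp add: divide_less_eq)
      also have "\<dots> \<le> 2^j * T powr \<theta>" using \<open>(2::real)^j2 \<le> 2^j\<close> Tp by (intro mult_right_mono) auto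
      finally have a0: "real d < 2^j * T powr \<theta>" .
      have a: "real d / 2^j \<le> T powr \<theta>" using a0 by (subst pos_divide_le_eq) (auto simp: mult.commute)

      have b: "((2::real)^j) powr \<theta> \<le> 2^j"
      proof -
        have "((2::real)^j) powr \<theta> \<le> ((2::real)^j) powr 1" using th by (intro powr_mono) auto
        then show ?thesis by simp
      qed
      have "real d * 2^j / 8^j = (real d / 2^j) / 2^j"
        by (simp add: field_simps power_mult_distrib[symmetric])
      also have "\<dots> \<le> T powr \<theta> / 2^j" by (rule divide_right_mono[OF a]) simp

      also have "\<dots> \<le> T powr \<theta> / ((2::real)^j) powr \<theta>" using b Tp by (intro divide_left_mono) auto
      also have "\<dots> = (T/2^j) powr \<theta>" using T by (simp add: powr_divide)
      finally show ?thesis .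
    qed
    define tt where "tt j r l = real r * (T/2^j) + real l * (T/2^j/real N)" for j r l :: nat
    define V where "V j r l c \<omega> = W (fst c) (tt j r (Suc l) - g (snd c)) \<omega> - W (fst c) (tt j r l - g (snd c)) \<omega>"
      for j r l :: nat and c :: "nat \<times> nat" and \<omega>
    define Zs where "Zs j = {z \<in> I \<rightarrow>\<^sub>E {-((8::int)^j)..8^j}. \<exists>c\<in>I. 1/2 \<le> \<bar>real_of_int (z c)\<bar> / 8^j}" for j :: nat
    define E1 where "E1 j p = {\<omega>\<in>space M. 2^j \<le> \<bar>V j (fst p) (snd (snd p)) (fst (snd p)) \<omega>\<bar>}"
      for j :: nat and p :: "nat \<times> (nat \<times> nat) \<times> nat"
    define E2 where "E2 j p = {\<omega>\<in>space M. \<forall>l<N. \<bar>\<Sum>c\<in>I. (real_of_int (snd p c) / 8^j) * V j (fst p) l c \<omega>\<bar> < 4 * (T/2^j) powr \<theta>}"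
      for j :: nat and p :: "nat \<times> (nat \<times> nat \<Rightarrow> int)"
    define Bad where "Bad j = (\<Union>p\<in>{..<(2::nat)^j}\<times>I\<times>{..<N}. E1 j p) \<union> (\<Union>p\<in>{..<(2::nat)^j}\<times>Zs j. E2 j p)" for j
    have ttlt: "tt j r l - g i < tt j r (Suc l) - g i" for j r l i
      using T N by (simp add: tt_def field_simps)
    have ttd: "tt j r (Suc l) - g i - (tt j r l - g i) = T/2^j/real N" for j r l i
      by (simp add: tt_def algebra_simps add_divide_distrib)

    have Vm: "V j r l c \<in> borel_measurable M" if "c \<in> I" for j r l c
    proof -
      have "fst c < m" using that by (auto simp: I_def)
      from incr_meas[OF bm this ttlt] show ?thesis unfolding V_def[abs_def] by simp
    qed
    have E1m: "E1 j p \<in> sets M" if "p \<in> {..<(2::nat)^j}\<times>I\<times>{..<N}" for j p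
    proof -
      have [measurable]: "V j (fst p) (snd (snd p)) (fst (snd p)) \<in> borel_measurable M"
        using that by (intro Vm) auto
      show ?thesis unfolding E1_def by measurable
    qed
    have E2m: "E2 j p \<in> sets M" for j p
      unfolding E2_def
      by (rule sets_all_less) (intro borel_measurable_sum borel_measurable_times borel_measurable_const Vm)
    have finZ: "finite (Zs j)" for j
      by (rule finite_subset[of _ "I \<rightarrow>\<^sub>E {-((8::int)^j)..8^j}"]) (auto simp: Zs_def finI intro: finite_PiE)
    have Badm: "Bad j \<in> sets M" for j
      unfolding Bad_def using E1m E2m finI finZ by (intro sets.Un sets.finite_UN) auto
    have b1: "measure M (\<Union>p\<in>{..<(2::nat)^j}\<times>I\<times>{..<N}. E1 j p) \<le> real d * T * (1/4)^j" for j
    proof -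
      have "measure M (\<Union>p\<in>{..<(2::nat)^j}\<times>I\<times>{..<N}. E1 j p) \<le> (\<Sum>p\<in>{..<(2::nat)^j}\<times>I\<times>{..<N}. measure M (E1 j p))"
        using E1m finI by (intro measure_UNION_le) auto
      also have "\<dots> \<le> (\<Sum>p\<in>{..<(2::nat)^j}\<times>I\<times>{..<N}. (T/2^j/real N) / (2^j)\<^sup>2)"
      proof (rule sum_mono)
        fix p assume p: "p \<in> {..<(2::nat)^j}\<times>I\<times>{..<N}"
        then have k: "fst (fst (snd p)) < m" by (auto simp: I_def)
        have "measure M {\<omega>\<in>space M. 2^j \<le> \<bar>W (fst (fst (snd p))) (tt j (fst p) (Suc (snd (snd p))) - g (snd (fst (snd p)))) \<omega> - W (fst (fst (snd p))) (tt j (fst p) (snd (snd p)) - g (snd (fst (snd p)))) \<omega>\<bar>}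
              \<le> (tt j (fst p) (Suc (snd (snd p))) - g (snd (fst (snd p))) - (tt j (fst p) (snd (snd p)) - g (snd (fst (snd p))))) / (2^j)\<^sup>2"
          by (rule tail_prob[OF bm k ttlt]) simp
        then show "measure M (E1 j p) \<le> (T/2^j/real N) / (2^j)\<^sup>2"
          unfolding E1_def V_def ttd .
      qed
      also have "\<dots> = real (2^j * (d * N)) * ((T/2^j/real N) / (2^j)\<^sup>2)"
        using finI by (simp add: card_cartesian_product d_def)
      also have "\<dots> = real d * T * (1/4)^j"
        using N by (simp add: field_simps power_mult_distrib[symmetric] power2_eq_square)
      finally show ?thesis .
    qed
    have cardZ: "real (card (Zs j)) \<le> (2*8^j+1)^d" for j
    proof -
      have "card (Zs j) \<le> card (I \<rightarrow>\<^sub>E {-((8::int)^j)..8^j})"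
        by (rule card_mono) (auto simp: Zs_def finI intro: finite_PiE)
      also have "\<dots> = (\<Prod>c\<in>I. card {-((8::int)^j)..8^j})" using finI by (rule card_PiE)
      also have "\<dots> = (nat (2*8^j+1))^d" by (simp add: d_def)
      finally have "card (Zs j) \<le> (nat (2*8^j+1))^d" .
      then have "real (card (Zs j)) \<le> real ((nat (2*8^j+1))^d)" by linarith
      also have "\<dots> = (2*8^j+1)^d" by (simp add: of_nat_power)
      finally show ?thesis .
    qed
    have b2: "measure M (\<Union>p\<in>{..<(2::nat)^j}\<times>Zs j. E2 j p) \<le> 2^j * (2*8^j+1)^d * (8 * (T/2^j) powr \<theta> / sqrt (T/2^j/real N))^N"
      if j: "j0 \<le> j" for j
    proof -
      define h where "h = T/2^j/real N"
      have h: "0 < h" using T N by (simp add: h_def)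
      have gap: "\<forall>i. Suc i < n \<longrightarrow> g i + real N * h < g (Suc i)"
      proof (intro allI impI)
        fix i assume "Suc i < n"
        then have "g i + \<gamma> \<le> g (Suc i)" using \<gamma> by auto
        moreover have "real N * h = T/2^j" using N by (simp add: h_def)
        ultimately show "g i + real N * h < g (Suc i)" using ell[OF j] by linarith
      qed
      have x: "0 < 4 * (T/2^j) powr \<theta>" using T by simp
      have "measure M (\<Union>p\<in>{..<(2::nat)^j}\<times>Zs j. E2 j p) \<le> (\<Sum>p\<in>{..<(2::nat)^j}\<times>Zs j. measure M (E2 j p))"
        using E2m finZ by (intro measure_UNION_le) auto
      also have "\<dots> \<le> (\<Sum>p\<in>{..<(2::nat)^j}\<times>Zs j. (2 * (4 * (T/2^j) powr \<theta>) / sqrt h)^N)"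
      proof (rule sum_mono)
        fix p assume p: "p \<in> {..<(2::nat)^j}\<times>Zs j"
        then obtain c0 where c0: "c0 \<in> I" "1/2 \<le> \<bar>real_of_int (snd p c0)\<bar> / 8^j" by (auto simp: Zs_def)
        have c0': "1/2 \<le> \<bar>real_of_int (snd p c0) / 8^j\<bar>" using c0(2) by (simp add: abs_div)
        have sb: "measure M {\<omega>\<in>space M. \<forall>l<N. \<bar>\<Sum>c\<in>{..<m}\<times>{..<n}. (real_of_int (snd p c) / 8^j) *
            (W (fst c) (real (fst p) * (T/2^j) + real (Suc l) * h - g (snd c)) \<omega> - W (fst c) (real (fst p) * (T/2^j) + real l * h - g (snd c)) \<omega>)\<bar> < 4 * (T/2^j) powr \<theta>}
         \<le> (2 * (4 * (T/2^j) powr \<theta>) / sqrt h) ^ N"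
          by (rule small_ball[OF bm h n gap x, of c0 "\<lambda>c. real_of_int (snd p c) / 8^j"]) (use c0 c0' in \<open>auto simp: I_def\<close>)
        show "measure M (E2 j p) \<le> (2 * (4 * (T/2^j) powr \<theta>) / sqrt h)^N"
          using sb unfolding E2_def V_def tt_def I_def h_def .
      qed
      also have "\<dots> = real (card ({..<(2::nat)^j}\<times>Zs j)) * (8 * (T/2^j) powr \<theta> / sqrt h)^N" by simp
      also have "\<dots> \<le> (2^j * (2*8^j+1)^d) * (8 * (T/2^j) powr \<theta> / sqrt h)^N"
      proof (rule mult_right_mono)
        have "real (card ({..<(2::nat)^j}\<times>Zs j)) = 2^j * real (card (Zs j))" by (simp add: card_cartesian_product)
        also have "\<dots> \<le> 2^j * (2*8^j+1)^d" using cardZ by (intro mult_left_mono) auto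
        finally show "real (card ({..<(2::nat)^j}\<times>Zs j)) \<le> 2^j * (2*8^j+1)^d" .
      qed (use T h in simp)
      finally show ?thesis unfolding h_def .
    qed
    define C where "C = real d * T + 3^d * (8 * sqrt N * T powr (\<theta> - 1/2))^N"
    have bB: "measure M (Bad j) \<le> C * (1/2)^j" if j: "j0 \<le> j" for j
    proof -
      have "measure M (Bad j) \<le> measure M (\<Union>p\<in>{..<(2::nat)^j}\<times>I\<times>{..<N}. E1 j p) + measure M (\<Union>p\<in>{..<(2::nat)^j}\<times>Zs j. E2 j p)"
        unfolding Bad_def using E1m E2m finI finZ by (intro measure_Un_le sets.finite_UN) auto
      also have "\<dots> \<le> real d * T * (1/4)^j + 3^d * (8 * sqrt N * T powr (\<theta> - 1/2))^N * (1/2)^j"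
        using b1[of j] b2[OF j] numeric[OF T th(1) N Nm, of j] by linarith
      also have "\<dots> \<le> real d * T * (1/2)^j + 3^d * (8 * sqrt N * T powr (\<theta> - 1/2))^N * (1/2)^j"
      proof -
        have "(1/4::real)^j \<le> (1/2)^j" by (intro power_mono) auto
        then show ?thesis using T by (simp add: mult_left_mono)
      qed
      also have "\<dots> = C * (1/2)^j" by (simp add: C_def algebra_simps)
      finally show ?thesis .
    qed
    define A where "A k = Bad (k + j0)" for k
    have "AE x in M. eventually (\<lambda>k. x \<in> space M - A k) sequentially"
    proof (rule borel_cantelli_AE1)
      show "A k \<in> sets M" for k by (simp add: A_def Badm)
      show "emeasure M (A k) < \<infinity>" for k by (simp add: A_def Badm emeasure_eq_measure)
      show "summable (\<lambda>k. measure M (A k))"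
      proof (rule summable_comparison_test')
        show "summable (\<lambda>k. C * (1/2)^(k + j0))"
          by (intro summable_mult) (simp add: power_add summable_mult2)
        fix k :: nat
        show "norm (measure M (A k)) \<le> C * (1/2)^(k + j0)" using bB[of "k + j0"] by (simp add: A_def)
      qed
    qed
    then show ?thesis
    proof (rule eventually_mono)
      fix x assume ev: "eventually (\<lambda>k. x \<in> space M - A k) sequentially"
      then obtain k1 where k1: "\<And>k. k1 \<le> k \<Longrightarrow> x \<in> space M - A k" by (auto simp: eventually_sequentially)
      define J where "J = k1 + j0"
      have good: "x \<in> space M" "x \<notin> Bad j" if "J \<le> j" for j
      proof -
        have "x \<in> space M - A (j - j0)" using that by (intro k1) (simp add: J_def)
        moreover have "j - j0 + j0 = j" using that by (simp add: J_def)
        ultimately show "x \<in> space M" "x \<notin> Bad j" by (auto simp: A_def)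
      qed
      have Jj0: "j0 \<le> J" by (simp add: J_def)
      define Y where "Y = (\<lambda>t (k, i). W k (t - g i) x)"
      have Ye: "Y t c = W (fst c) (t - g (snd c)) x" for t c by (cases c) (simp add: Y_def)
      have YV: "Y (tt j r (Suc l)) c - Y (tt j r l) c = V j r l c x" for j r l c
        by (simp add: Ye V_def)
      have "holder_rough I \<theta> (T/2) T Y"
      proof (rule det[OF finI Ine T _ N _ tt_def])
        show "0 < \<theta>" using th by simp
        show "2 \<le> J" using j02 Jj0 by simp
        fix j r :: nat and c :: "nat \<times> nat" and l :: nat assume j: "J \<le> j" and r: "r < 2^j" and c: "c \<in> I" and l: "l < N"
        have "x \<notin> E1 j (r, c, l)" using good[OF j] r c l unfolding Bad_def by blast
        then show "\<bar>Y (tt j r (Suc l)) c - Y (tt j r l) c\<bar> < 2^j"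
          using good(1)[OF j] unfolding YV E1_def by auto
      next
        fix j r :: nat and z :: "nat \<times> nat \<Rightarrow> int" assume j: "J \<le> j" and r: "r < 2^j" and z: "z \<in> I \<rightarrow>\<^sub>E {-((8::int)^j)..8^j}"
          and zc: "\<exists>c\<in>I. 1/2 \<le> \<bar>real_of_int (z c)\<bar> / 8^j"
        have "z \<in> Zs j" using z zc by (simp add: Zs_def)
        then have "x \<notin> E2 j (r, z)" using good[OF j] r unfolding Bad_def by blast
        then show "\<exists>l<N. 4 * (T/2^j) powr \<theta> \<le> \<bar>\<Sum>c\<in>I. (real_of_int (z c) / 8^j) * (Y (tt j r (Suc l)) c - Y (tt j r l) c)\<bar>"
          using good(1)[OF j] unfolding YV E2_def by auto
      next
        fix j assume "J \<le> j"
        then show "real (card I) * 2^j / 8^j \<le> (T/2^j) powr \<theta>" using H3[of j] Jj0 by (simp add: d_def)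
      qed
      then show "holder_rough ({..<m} \<times> {..<n}) \<theta> (T / 2) T (\<lambda>t (k, i). W k (t - g i) x)"
        by (simp add: I_def Y_def)
    qed
  qed
qed


end
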